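(* Let $P\ge4$ be even and $\gamma>0$. For each $\beta'>0$ let $(\bar m,\bar q,\bar p)=(\bar m(\beta'),\bar q(\beta'),\bar p(\beta'))$ be a solution of $$\bar m=\mathbb E_x\tanh\Big[\tfrac P2\beta'\bar m^{P-1}+x\sqrt{\beta'\gamma\tfrac P2\bar p\,\bar q^{P/2-1}}\Big],\quad \bar q=\mathbb E_x\tanh^2\Big[\tfrac P2\beta'\bar m^{P-1}+x\sqrt{\beta'\gamma\tfrac P2\bar p\,\bar q^{P/2-1}}\Big],\quad \bar p=\beta'\bar q^{P/2},$$ where $x$ is a standard Gaussian. Assume that, as $\beta'\to\infty$, $\bar m(\beta')\to m_\infty$ and $\beta'(1-\bar q(\beta'))$ converges to a finite limit. Then $$m_\infty=\mathrm{erf}\Big[\tfrac12\sqrt{\tfrac P\gamma}\,m_\infty^{P-1}\Big].$$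
   Context: These are the replica-symmetric self-consistency equations of the dense Hebbian network (with $\beta'=2\beta/P!$ the rescaled inverse temperature and $\gamma$ the storage load); $\mathrm{erf}$ is the error function. *)

theory Defs
  imports "HOL-Probability.Probability"
begin

definition gauss_E :: "(real \<Rightarrow> real) \<Rightarrow> real" where
  "gauss_E f = (LINT x|lborel. std_normal_density x * f x)"

definition erf :: "real \<Rightarrow> real" where
  "erf z = 2 / sqrt pi * (LBINT t=0..z. exp (- (t\<^sup>2)))"

definition rs_arg :: "nat \<Rightarrow> real \<Rightarrow> real \<Rightarrow> real \<Rightarrow> real \<Rightarrow> real \<Rightarrow> real \<Rightarrow> real" where
  "rs_arg P \<gamma> b m q p x =
     real P / 2 * b * m ^ (P - 1) + x * sqrt (b * \<gamma> * (real P / 2) * p * q ^ (P div 2 - 1))"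

end

theory Submission
  imports Defs
begin

lemma FTC_at:
  fixes f :: "real \<Rightarrow> real"
  assumes "continuous_on UNIV f"
  shows "((\<lambda>u. LBINT y=0..u. f y) has_real_derivative f x) (at x)"
proof -
  define a where "a = min 0 x - 1"
  define b where "b = max 0 x + 1"
  have "((\<lambda>u. LBINT y=0..u. f y) has_vector_derivative (f x)) (at x within {a..b})"
    using interval_integral_FTC2[of a 0 b f x] continuous_on_subset[OF assms, of "{a..b}"]
    by (auto simp: a_def b_def zero_ereal_def)
  then have "((\<lambda>u. LBINT y=0..u. f y) has_vector_derivative (f x)) (at x within {a<..<b})"
    by (rule has_vector_derivative_within_subset) auto
  then have "((\<lambda>u. LBINT y=0..u. f y) has_vector_derivative (f x)) (at x)"
    by (subst (asm) has_vector_derivative_within_open) (auto simp: a_def b_def)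
  then show ?thesis
    by (simp add: has_real_derivative_iff_has_vector_derivative)
qed

definition Phi0 :: "real \<Rightarrow> real" where
  "Phi0 u = (LBINT y=0..u. std_normal_density y)"

lemma cont_snd: "continuous_on UNIV std_normal_density"
  unfolding std_normal_density_def by (intro continuous_intros) auto

lemma Phi0_deriv: "(Phi0 has_real_derivative std_normal_density x) (at x)"
  unfolding Phi0_def[abs_def] by (rule FTC_at[OF cont_snd])

lemma Phi0_0: "Phi0 0 = 0" by (simp add: Phi0_def zero_ereal_def)

lemma Phi0_odd: "Phi0 (- x) = - Phi0 x"
proof -
  have "\<And>y. ((\<lambda>x. Phi0 (-x) + Phi0 x) has_real_derivative 0) (at y)"
  proof -
    fix y
    have "((\<lambda>x. Phi0 (-x) + Phi0 x) has_real_derivative (std_normal_density (-y) * (-1) + std_normal_density y)) (at y)"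
      using DERIV_chain2[OF Phi0_deriv, of uminus "-1" y, OF DERIV_minus[OF DERIV_ident]]
        by (intro DERIV_add Phi0_deriv) (auto simp: o_def)
    then show "((\<lambda>x. Phi0 (-x) + Phi0 x) has_real_derivative 0) (at y)"
      by (simp add: std_normal_density_def)
  qed
  from DERIV_isconst_all[of _ x 0] this have "Phi0 (-x) + Phi0 x = Phi0 (-0) + Phi0 0" by blast
  then show ?thesis by (simp add: Phi0_0)
qed

lemma erf_Phi0: "erf (c / sqrt 2) = 2 * Phi0 c"
proof -
  have ce: "continuous_on UNIV (\<lambda>t::real. exp (- t\<^sup>2))" by (intro continuous_intros)
  have "\<And>y. ((\<lambda>c. erf (c / sqrt 2) - 2 * Phi0 c) has_real_derivative 0) (at y)"
  proof -
    fix y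
    have d1: "((\<lambda>c. c / sqrt 2) has_real_derivative 1/sqrt 2) (at y)"
      using DERIV_cdivide[OF DERIV_ident, of "sqrt 2" y] by simp
    have "((\<lambda>c. erf (c / sqrt 2) - 2 * Phi0 c) has_real_derivative
       (2 / sqrt pi * (exp (- (y / sqrt 2)\<^sup>2) * (1 / sqrt 2)) - 2 * std_normal_density y)) (at y)"
      unfolding erf_def[abs_def]
      using DERIV_chain2[OF FTC_at[OF ce] d1]
      by (intro DERIV_diff DERIV_cmult Phi0_deriv) (auto intro!: derivative_eq_intros simp: o_def)
    moreover have "2 / sqrt pi * (exp (- (y / sqrt 2)\<^sup>2) * (1 / sqrt 2)) = 2 * std_normal_density y"
      by (simp add: std_normal_density_def power_divide real_sqrt_mult field_simps)
    ultimately show "((\<lambda>c. erf (c / sqrt 2) - 2 * Phi0 c) has_real_derivative 0) (at y)" by simp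
  qed
  from DERIV_isconst_all[of _ c 0] this have "erf (c / sqrt 2) - 2 * Phi0 c = erf (0 / sqrt 2) - 2 * Phi0 0" by blast
  then show ?thesis by (simp add: Phi0_0 erf_def zero_ereal_def)
qed


lemma int_sym:
  assumes "a \<ge> 0"
  shows "(\<integral>x. indicator {-a..a} x *\<^sub>R std_normal_density x \<partial>lborel) = 2 * Phi0 a"
    and "(\<integral>x. indicator {-a<..<a} x *\<^sub>R std_normal_density x \<partial>lborel) = 2 * Phi0 a"
proof -
  have "(LBINT x=-a..a. std_normal_density x) = Phi0 a - Phi0 (-a)"
    by (rule interval_integral_FTC_finite)
      (auto intro: continuous_on_subset[OF cont_snd] has_field_derivative_at_within[OF Phi0_deriv]
        simp: has_real_derivative_iff_has_vector_derivative[symmetric])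
  also have "\<dots> = 2 * Phi0 a" by (simp add: Phi0_odd)
  finally have e: "(LBINT x=-a..a. std_normal_density x) = 2 * Phi0 a" .
  show "(\<integral>x. indicator {-a..a} x *\<^sub>R std_normal_density x \<partial>lborel) = 2 * Phi0 a"
    using e interval_integral_Icc[of "-a" a std_normal_density] assms
    by (simp add: set_lebesgue_integral_def)
  show "(\<integral>x. indicator {-a<..<a} x *\<^sub>R std_normal_density x \<partial>lborel) = 2 * Phi0 a"
    using e interval_integral_Ioo[of "ereal (-a)" "ereal a" std_normal_density] assms
    by (simp add: set_lebesgue_integral_def)
qed

lemma int_snd: "integrable lborel std_normal_density"
  using integrable_normal_density[of 0 1] by simp

lemma integrable_sgn: "integrable lborel (\<lambda>x. std_normal_density x * sgn (x + c))"
  by (rule Bochner_Integration.integrable_bound[OF int_snd]) (auto simp: abs_mult sgn_real_def)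

lemma H_eq: "(\<integral>x. std_normal_density x * sgn (x + c) \<partial>lborel) = 2 * Phi0 c"
proof -
  let ?H = "(\<integral>x. std_normal_density x * sgn (x + c) \<partial>lborel)"
  have refl: "?H = (\<integral>x. std_normal_density x * sgn (c - x) \<partial>lborel)"
    using lborel_integral_real_affine[of "-1" "\<lambda>x. std_normal_density x * sgn (x + c)" 0]
    by (simp add: std_normal_density_def)
  have i2: "integrable lborel (\<lambda>x. std_normal_density x * sgn (c - x))"
    by (rule Bochner_Integration.integrable_bound[OF int_snd]) (auto simp: abs_mult sgn_real_def)
  have "2 * ?H = (\<integral>x. std_normal_density x * sgn (x + c) + std_normal_density x * sgn (c - x) \<partial>lborel)"
    using refl integrable_sgn i2 by simp
  also have "\<dots> = (\<integral>x. sgn c * (indicator {-\<bar>c\<bar><..<\<bar>c\<bar>} x *\<^sub>R std_normal_density x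
       + indicator {-\<bar>c\<bar>..\<bar>c\<bar>} x *\<^sub>R std_normal_density x) \<partial>lborel)"
  proof (rule Bochner_Integration.integral_cong[OF HOL.refl])
    fix x
    have "sgn (x + c) + sgn (c - x) = sgn c * (indicator {-\<bar>c\<bar><..<\<bar>c\<bar>} x + indicator {-\<bar>c\<bar>..\<bar>c\<bar>} x)"
      by (auto simp: sgn_real_def indicator_def abs_if)
    then show "std_normal_density x * sgn (x + c) + std_normal_density x * sgn (c - x) =
      sgn c * (indicator {-\<bar>c\<bar><..<\<bar>c\<bar>} x *\<^sub>R std_normal_density x
       + indicator {-\<bar>c\<bar>..\<bar>c\<bar>} x *\<^sub>R std_normal_density x)"
      by (simp add: algebra_simps) (metis distrib_left mult.commute mult.left_commute)
  qed
  also have "\<dots> = sgn c * (2 * Phi0 \<bar>c\<bar> + 2 * Phi0 \<bar>c\<bar>)"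
    using int_sym[of "\<bar>c\<bar>"]
      integrable_mult_indicator[OF _ int_snd, of "{-\<bar>c\<bar><..<\<bar>c\<bar>}"]
      integrable_mult_indicator[OF _ int_snd, of "{-\<bar>c\<bar>..\<bar>c\<bar>}"]
    by (subst integral_mult_right_zero, subst Bochner_Integration.integral_add) auto
  finally have "?H = sgn c * 2 * Phi0 \<bar>c\<bar>" by simp
  then show ?thesis
    by (cases c "0::real" rule: linorder_cases) (auto simp: Phi0_odd Phi0_0 abs_if)
qed


lemma pointwise_lim:
  fixes C :: "real \<Rightarrow> real"
  assumes "(C \<longlongrightarrow> y) at_top" "y \<noteq> 0"
  shows "((\<lambda>b. tanh (b * C b)) \<longlongrightarrow> sgn y) at_top"
proof (cases "y > 0")
  case True
  have "filterlim (\<lambda>b. b * C b) at_top at_top"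
    by (rule filterlim_at_top_mult_tendsto_pos[OF assms(1) True filterlim_ident])
  then have "((\<lambda>b. tanh (b * C b)) \<longlongrightarrow> 1) at_top"
    by (rule filterlim_compose[OF tanh_real_at_top])
  then show ?thesis using True by simp
next
  case False
  then have y: "y < 0" using assms(2) by simp
  have "((\<lambda>b. - C b) \<longlongrightarrow> - y) at_top" by (intro tendsto_intros assms(1))
  then have "filterlim (\<lambda>b. b * (- C b)) at_top at_top"
    by (rule filterlim_at_top_mult_tendsto_pos[OF _ _ filterlim_ident]) (use y in simp)
  then have "filterlim (\<lambda>b. b * C b) at_bot at_top"
    by (simp add: filterlim_uminus_at_top)
  then have "((\<lambda>b. tanh (b * C b)) \<longlongrightarrow> -1) at_top"
    by (rule filterlim_compose[OF tanh_real_at_bot])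
  then show ?thesis using y by simp
qed

theorem theorem5:
  fixes P :: nat and \<gamma> :: real
    and m q p :: "real \<Rightarrow> real" and m_inf :: real
  assumes "even P" and "P \<ge> 4" and "\<gamma> > 0"
    and "\<And>b. b > 0 \<Longrightarrow> m b = gauss_E (\<lambda>x. tanh (rs_arg P \<gamma> b (m b) (q b) (p b) x))"
    and "\<And>b. b > 0 \<Longrightarrow> q b = gauss_E (\<lambda>x. (tanh (rs_arg P \<gamma> b (m b) (q b) (p b) x))\<^sup>2)"
    and "\<And>b. b > 0 \<Longrightarrow> p b = b * q b ^ (P div 2)"
    and "(m \<longlongrightarrow> m_inf) at_top"
    and "\<exists>L. ((\<lambda>b. b * (1 - q b)) \<longlongrightarrow> L) at_top"
  shows "m_inf = erf (1/2 * sqrt (real P / \<gamma>) * m_inf ^ (P - 1))"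
proof -
  obtain L where L: "((\<lambda>b. b * (1 - q b)) \<longlongrightarrow> L) at_top" using assms(8) by blast
  have "((\<lambda>b. b * (1 - q b) * (1 / b)) \<longlongrightarrow> L * 0) at_top"
    by (intro tendsto_mult L tendsto_divide_0[OF tendsto_const] filterlim_ident filterlim_at_top_imp_at_infinity)
  then have "((\<lambda>b. b * (1 - q b) * (1 / b)) \<longlongrightarrow> 0) at_top" by simp
  then have "((\<lambda>b. 1 - q b) \<longlongrightarrow> 0) at_top"
  proof (rule Lim_transform_eventually)
    show "\<forall>\<^sub>F b in at_top. b * (1 - q b) * (1 / b) = 1 - q b"
      using eventually_gt_at_top[of "0::real"] by eventually_elim simp
  qed
  then have "((\<lambda>b. 1 - (1 - q b)) \<longlongrightarrow> 1 - 0) at_top" by (intro tendsto_intros)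
  then have qlim: "(q \<longlongrightarrow> 1) at_top" by simp
  define Ab where "Ab b = real P / 2 * m b ^ (P - 1)" for b
  define Bb where "Bb b = sqrt (\<gamma> * (real P / 2) * q b ^ (P - 1))" for b
  define A where "A = real P / 2 * m_inf ^ (P - 1)"
  define B where "B = sqrt (\<gamma> * (real P / 2))"
  have Bpos: "B > 0" using assms(2,3) by (simp add: B_def)
  have Alim: "(Ab \<longlongrightarrow> A) at_top" unfolding Ab_def[abs_def] A_def
    by (intro tendsto_intros assms(7))
  have "(Bb \<longlongrightarrow> sqrt (\<gamma> * (real P / 2) * 1 ^ (P - 1))) at_top" unfolding Bb_def[abs_def]
    by (intro tendsto_intros qlim)
  then have Blim: "(Bb \<longlongrightarrow> B) at_top" by (simp add: B_def)
  have Pd: "P div 2 + (P div 2 - 1) = P - 1" using assms(1,2) by (elim evenE) auto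
  then have Pd': "P div 2 + (P div 2 - Suc 0) = P - Suc 0" by simp
  have arg: "rs_arg P \<gamma> b (m b) (q b) (p b) x = b * (Ab b + x * Bb b)" if "b > 0" for b x
  proof -
    have "b * \<gamma> * (real P / 2) * p b * q b ^ (P div 2 - 1) = b\<^sup>2 * (\<gamma> * (real P / 2) * q b ^ (P - 1))"
      using assms(6)[OF that] by (simp add: power2_eq_square power_add[symmetric] Pd Pd')
    then have "sqrt (b * \<gamma> * (real P / 2) * p b * q b ^ (P div 2 - 1)) = sqrt (b\<^sup>2) * Bb b"
      unfolding Bb_def by (simp only: real_sqrt_mult)
    then have "sqrt (b * \<gamma> * (real P / 2) * p b * q b ^ (P div 2 - 1)) = b * Bb b"
      using that by simp
    then show ?thesis unfolding rs_arg_def Ab_def by (simp add: algebra_simps)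
  qed
  define s where "s b x = std_normal_density x * tanh (b * (Ab b + x * Bb b))" for b x
  define f where "f x = std_normal_density x * sgn (x + A / B)" for x
  have mev: "\<forall>\<^sub>F b in at_top. m b = integral\<^sup>L lborel (s b)"
    using eventually_gt_at_top[of 0]
  proof eventually_elim
    case (elim b)
    show ?case by (subst assms(4)[OF elim]) (simp add: gauss_E_def s_def[abs_def] arg[OF elim])
  qed
  have tb: "\<And>y::real. \<bar>tanh y\<bar> \<le> 1"
    using tanh_real_bounds by (auto simp: abs_le_iff less_imp_le)
  have conv: "((\<lambda>b. integral\<^sup>L lborel (s b)) \<longlongrightarrow> integral\<^sup>L lborel f) at_top"
  proof (rule integral_dominated_convergence_at_top[where w = std_normal_density])
    show "f \<in> borel_measurable lborel" unfolding f_def by measurable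
    show "s t \<in> borel_measurable lborel" for t
      unfolding s_def measurable_lborel2 std_normal_density_def by (intro borel_measurable_continuous_onI continuous_intros) (auto simp: cosh_real_pos[THEN less_imp_neq, symmetric])
    show "integrable lborel std_normal_density" by (rule int_snd)
    show "\<forall>\<^sub>F i in at_top. AE x in lborel. norm (s i x) \<le> std_normal_density x"
      by (intro always_eventually allI AE_I2)
        (auto simp: s_def abs_mult intro!: mult_left_le tb)
    show "AE x in lborel. ((\<lambda>i. s i x) \<longlongrightarrow> f x) at_top"
      using AE_lborel_singleton[of "- A / B"]
    proof eventually_elim
      fix x :: real assume x: "x \<noteq> - A / B"
      have y: "A + x * B \<noteq> 0" using x Bpos by (auto simp: field_simps)
      have "((\<lambda>b. Ab b + x * Bb b) \<longlongrightarrow> A + x * B) at_top"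
        by (intro tendsto_intros Alim Blim)
      from pointwise_lim[OF this y]
      have "((\<lambda>i. s i x) \<longlongrightarrow> std_normal_density x * sgn (A + x * B)) at_top"
        unfolding s_def by (intro tendsto_intros)
      moreover have "sgn (A + x * B) = sgn (x + A / B)"
      proof -
        have "A + x * B = B * (x + A / B)" using Bpos by (simp add: field_simps)
        then show ?thesis using Bpos by (simp add: sgn_mult)
      qed
      ultimately show "((\<lambda>i. s i x) \<longlongrightarrow> f x) at_top" by (simp add: f_def)
    qed
  qed
  have "(m \<longlongrightarrow> integral\<^sup>L lborel f) at_top"
    using conv
  proof (rule Lim_transform_eventually)
    show "\<forall>\<^sub>F b in at_top. integral\<^sup>L lborel (s b) = m b"
      using mev by eventually_elim simp
  qed
  with assms(7) have "m_inf = integral\<^sup>L lborel f"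
    using tendsto_unique by (metis trivial_limit_at_top_linorder)
  also have "\<dots> = 2 * Phi0 (A / B)" unfolding f_def by (rule H_eq)
  also have "\<dots> = erf ((A / B) / sqrt 2)" by (rule erf_Phi0[symmetric])
  also have "(A / B) / sqrt 2 = 1/2 * sqrt (real P / \<gamma>) * m_inf ^ (P - 1)"
    using assms(2,3)
    by (simp add: A_def B_def real_sqrt_mult real_sqrt_divide field_simps)
  finally show ?thesis .
qed

end
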